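(* Let $X$ be a compact Hausdorff space, $\mathcal C=C(X)$ with the supremum norm, $\alpha\colon X\to X$ continuous, $\delta f=f\circ\alpha$, and $A$ a transfer operator for $(\mathcal C,\delta)$. For $\varphi\in\mathcal C$ and $n\in\mathbb N$ let $\lambda(\varphi,A)=\lim_{k\to\infty}\frac1k\ln\|(A(e^{\varphi}\,\cdot\,))^k\mathbf 1\|$ and $\lambda(n\varphi,A^n)=\lim_{k\to\infty}\frac1k\ln\|(A^n(e^{n\varphi}\,\cdot\,))^k\mathbf 1\|$ be the logarithms of the spectral radii of the operators $f\mapsto A(e^\varphi f)$ and $f\mapsto A^n(e^{n\varphi}f)$ respectively. Then for all $\varphi\in\mathcal C$ and $n\in\mathbb N$, \[ n\lambda(\varphi,A)\le\lambda(n\varphi,A^n). \]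
   Context: A transfer operator for $(\mathcal C,\delta)$ is a positive linear operator $A\colon\mathcal C\to\mathcal C$ (mapping nonnegative functions to nonnegative functions) with $A((\delta f)g)=f\,Ag$ for all $f,g\in\mathcal C$. $\mathbf 1$ is the constant function $1$. *)

theory Defs
  imports "HOL-Analysis.Analysis"
begin

text \<open>The compact Hausdorff space X is the type 'a (class t2_space, with compact UNIV);
  C(X) is the set of continuous real functions on 'a, with the supremum norm.\<close>

definition supnorm :: "('a::topological_space \<Rightarrow> real) \<Rightarrow> real" where
  "supnorm f = (SUP x. \<bar>f x\<bar>)"

definition transfer_op :: "('a::topological_space \<Rightarrow> 'a) \<Rightarrow> (('a \<Rightarrow> real) \<Rightarrow> ('a \<Rightarrow> real)) \<Rightarrow> bool" where
  "transfer_op \<alpha> A \<longleftrightarrow>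
     (\<forall>f. continuous_on UNIV f \<longrightarrow> continuous_on UNIV (A f)) \<and>
     (\<forall>f g. continuous_on UNIV f \<longrightarrow> continuous_on UNIV g \<longrightarrow> A (\<lambda>x. f x + g x) = (\<lambda>x. A f x + A g x)) \<and>
     (\<forall>c f. continuous_on UNIV f \<longrightarrow> A (\<lambda>x. c * f x) = (\<lambda>x. c * A f x)) \<and>
     (\<forall>f. continuous_on UNIV f \<longrightarrow> (\<forall>x. f x \<ge> 0) \<longrightarrow> (\<forall>x. A f x \<ge> 0)) \<and>
     (\<forall>f g. continuous_on UNIV f \<longrightarrow> continuous_on UNIV g \<longrightarrow>
        A (\<lambda>x. f (\<alpha> x) * g x) = (\<lambda>x. f x * A g x))"

definition eln :: "real \<Rightarrow> ereal" where
  "eln x = (if x > 0 then ereal (ln x) else -\<infinity>)"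

definition wop :: "('a \<Rightarrow> real) \<Rightarrow> (('a \<Rightarrow> real) \<Rightarrow> ('a \<Rightarrow> real)) \<Rightarrow> ('a \<Rightarrow> real) \<Rightarrow> ('a \<Rightarrow> real)" where
  "wop \<phi> A f = A (\<lambda>x. exp (\<phi> x) * f x)"

definition lam :: "('a::topological_space \<Rightarrow> real) \<Rightarrow> (('a \<Rightarrow> real) \<Rightarrow> ('a \<Rightarrow> real)) \<Rightarrow> ereal" where
  "lam \<phi> A = lim (\<lambda>k. eln (supnorm ((wop \<phi> A ^^ k) (\<lambda>_. 1))) / ereal (real k))"

end

theory Submission
  imports Defs
begin

abbreviation ctn :: "('a::topological_space \<Rightarrow> real) \<Rightarrow> bool" where
  "ctn f \<equiv> continuous_on UNIV f"

definition posop :: "(('a::topological_space \<Rightarrow> real) \<Rightarrow> ('a \<Rightarrow> real)) \<Rightarrow> bool" where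
  "posop B \<longleftrightarrow>
     (\<forall>f. ctn f \<longrightarrow> ctn (B f)) \<and>
     (\<forall>f g. ctn f \<longrightarrow> ctn g \<longrightarrow> B (\<lambda>x. f x + g x) = (\<lambda>x. B f x + B g x)) \<and>
     (\<forall>c f. ctn f \<longrightarrow> B (\<lambda>x. c * f x) = (\<lambda>x. c * B f x)) \<and>
     (\<forall>f. ctn f \<longrightarrow> (\<forall>x. f x \<ge> 0) \<longrightarrow> (\<forall>x. B f x \<ge> 0))"

lemma transfer_posop: "transfer_op \<alpha> A \<Longrightarrow> posop A"
  unfolding transfer_op_def posop_def by blast

lemma posopD:
  assumes "posop B"
  shows "ctn f \<Longrightarrow> ctn (B f)"
    and "ctn f \<Longrightarrow> ctn g \<Longrightarrow> B (\<lambda>x. f x + g x) = (\<lambda>x. B f x + B g x)"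
    and "ctn f \<Longrightarrow> B (\<lambda>x. c * f x) = (\<lambda>x. c * B f x)"
    and "ctn f \<Longrightarrow> (\<And>x. f x \<ge> 0) \<Longrightarrow> B f x \<ge> 0"
  using assms unfolding posop_def by blast+

lemma posop_zero: "posop B \<Longrightarrow> B (\<lambda>x. 0) = (\<lambda>x. 0)"
  using posopD(3)[of B "\<lambda>x. 0" 0] by simp

lemma posop_diff:
  assumes "posop B" "ctn f" "ctn g"
  shows "B (\<lambda>x. f x - g x) = (\<lambda>x. B f x - B g x)"
proof -
  have cg: "ctn (\<lambda>x. (-1) * g x)" by (intro continuous_intros assms)
  have "B (\<lambda>x. f x - g x) = B (\<lambda>x. f x + (-1) * g x)" by simp
  also have "\<dots> = (\<lambda>x. B f x + B (\<lambda>x. (-1) * g x) x)" using posopD(2)[OF assms(1) assms(2) cg] .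
  also have "\<dots> = (\<lambda>x. B f x - B g x)" using posopD(3)[OF assms(1) assms(3), of "-1"] by simp
  finally show ?thesis .
qed

lemma posop_mono:
  assumes "posop B" "ctn f" "ctn g" "\<And>x. f x \<le> g x"
  shows "B f x \<le> B g x"
proof -
  have "ctn (\<lambda>x. g x - f x)" by (intro continuous_intros assms)
  then have "B (\<lambda>x. g x - f x) x \<ge> 0" using posopD(4)[OF assms(1)] assms(4) by simp
  then show ?thesis using posop_diff[OF assms(1) assms(3) assms(2)] by (metis diff_ge_0_iff_ge)
qed

lemma posop_dom:
  assumes "posop B" "ctn f" "ctn g" "\<And>x. f x \<le> c * g x"
  shows "B f x \<le> c * B g x"
proof -
  have "ctn (\<lambda>x. c * g x)" by (intro continuous_intros assms)
  from posop_mono[OF assms(1,2) this assms(4)] show ?thesis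
    using posopD(3)[OF assms(1) assms(3), of c] by simp
qed

lemma posop_sum:
  assumes "posop B" "finite I" "\<And>r. ctn (f r)"
  shows "B (\<lambda>x. \<Sum>r\<in>I. f r x) = (\<lambda>x. \<Sum>r\<in>I. B (f r) x)"
  using assms(2)
proof (induction I rule: finite_induct)
  case empty
  then show ?case using posop_zero[OF assms(1)] by simp
next
  case (insert a I)
  have c: "ctn (\<lambda>x. \<Sum>r\<in>I. f r x)" by (intro continuous_intros assms)
  have "B (\<lambda>x. \<Sum>r\<in>insert a I. f r x) = B (\<lambda>x. f a x + (\<Sum>r\<in>I. f r x))"
    using insert by simp
  also have "\<dots> = (\<lambda>x. B (f a) x + B (\<lambda>x. \<Sum>r\<in>I. f r x) x)"
    using posopD(2)[OF assms(1) assms(3) c] .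
  finally show ?case using insert by simp
qed

lemma posop_wop:
  assumes B: "posop B" and cp: "ctn \<psi>"
  shows "posop (wop \<psi> B)"
  unfolding posop_def
proof (intro conjI allI impI)
  fix f :: "'a \<Rightarrow> real" assume f: "ctn f"
  then have c: "ctn (\<lambda>x. exp (\<psi> x) * f x)" by (intro continuous_intros cp)
  show "ctn (wop \<psi> B f)" unfolding wop_def by (rule posopD(1)[OF B c])
next
  fix f g :: "'a \<Rightarrow> real" assume f: "ctn f" and g: "ctn g"
  have cf: "ctn (\<lambda>x. exp (\<psi> x) * f x)" by (intro continuous_intros cp f)
  have cg: "ctn (\<lambda>x. exp (\<psi> x) * g x)" by (intro continuous_intros cp g)
  have "wop \<psi> B (\<lambda>x. f x + g x) = B (\<lambda>x. exp (\<psi> x) * f x + exp (\<psi> x) * g x)"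
    unfolding wop_def by (simp add: distrib_left)
  also have "\<dots> = (\<lambda>x. B (\<lambda>x. exp (\<psi> x) * f x) x + B (\<lambda>x. exp (\<psi> x) * g x) x)"
    by (rule posopD(2)[OF B cf cg])
  finally show "wop \<psi> B (\<lambda>x. f x + g x) = (\<lambda>x. wop \<psi> B f x + wop \<psi> B g x)"
    unfolding wop_def .
next
  fix c :: real and f :: "'a \<Rightarrow> real" assume f: "ctn f"
  have cf: "ctn (\<lambda>x. exp (\<psi> x) * f x)" by (intro continuous_intros cp f)
  have "wop \<psi> B (\<lambda>x. c * f x) = B (\<lambda>x. c * (exp (\<psi> x) * f x))"
    unfolding wop_def by (simp add: mult.left_commute)
  also have "\<dots> = (\<lambda>x. c * B (\<lambda>x. exp (\<psi> x) * f x) x)" by (rule posopD(3)[OF B cf])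
  finally show "wop \<psi> B (\<lambda>x. c * f x) = (\<lambda>x. c * wop \<psi> B f x)" unfolding wop_def .
next
  fix f :: "'a \<Rightarrow> real" and x assume f: "ctn f" and nn: "\<forall>x. 0 \<le> f x"
  have cf: "ctn (\<lambda>x. exp (\<psi> x) * f x)" by (intro continuous_intros cp f)
  show "0 \<le> wop \<psi> B f x" unfolding wop_def
    by (rule posopD(4)[OF B cf]) (use nn in simp)
qed

lemma ctn_funpow: "continuous_on UNIV (\<alpha>::'a::topological_space \<Rightarrow> 'a) \<Longrightarrow> continuous_on UNIV (\<alpha> ^^ m)"
proof (induction m)
  case 0 then show ?case by (simp add: continuous_on_id)
next
  case (Suc m)
  have "continuous_on UNIV (\<alpha> \<circ> \<alpha> ^^ m)"
    by (rule continuous_on_compose[OF Suc(1)[OF Suc(2)]]) (rule continuous_on_subset[OF Suc(2)], simp)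
  then show ?case by simp
qed

lemma ctn_comp_pow: "continuous_on UNIV (\<alpha>::'a::topological_space \<Rightarrow> 'a) \<Longrightarrow> ctn \<psi> \<Longrightarrow> ctn (\<lambda>x. \<psi> ((\<alpha> ^^ m) x))"
  using continuous_on_compose[OF ctn_funpow[of \<alpha> m], of \<psi>] continuous_on_subset[of UNIV \<psi>] by (simp add: o_def)

lemma transfer_pow:
  assumes T: "transfer_op \<alpha> A" and ca: "continuous_on UNIV \<alpha>"
  shows "transfer_op (\<alpha> ^^ m) (A ^^ m)"
proof (induction m)
  case 0
  then show ?case unfolding transfer_op_def by simp
next
  case (Suc m)
  have IH: "posop (A ^^ m)" using Suc transfer_posop by blast
  have PA: "posop A" using T transfer_posop by blast
  show ?case unfolding transfer_op_def
  proof (intro conjI allI impI, goal_cases)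
    case (1 f) then show ?case using IH PA by (simp add: posopD)
  next
    case (2 f g) then show ?case using IH PA by (simp add: posopD)
  next
    case (3 c f) then show ?case using IH PA by (simp add: posopD)
  next
    case (4 f) then show ?case using IH PA by (simp add: posopD)
  next
    case (5 f g)
    have "ctn (f \<circ> \<alpha>)" by (rule continuous_on_compose[OF ca]) (rule continuous_on_subset[OF 5(1)], simp)
    then have cfa: "ctn (\<lambda>x. f (\<alpha> x))" by (simp add: o_def)
    have "(A ^^ Suc m) (\<lambda>x. f ((\<alpha> ^^ Suc m) x) * g x) = A ((A ^^ m) (\<lambda>x. (\<lambda>y. f (\<alpha> y)) ((\<alpha> ^^ m) x) * g x))"
      by (simp add: funpow_swap1)
    also have "\<dots> = A (\<lambda>x. f (\<alpha> x) * (A ^^ m) g x)"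
    proof -
      have "(A ^^ m) (\<lambda>x. (\<lambda>y. f (\<alpha> y)) ((\<alpha> ^^ m) x) * g x) = (\<lambda>x. f (\<alpha> x) * (A ^^ m) g x)"
        using Suc cfa 5 unfolding transfer_op_def by blast
      then show ?thesis by simp
    qed
    also have "\<dots> = (\<lambda>x. f x * A ((A ^^ m) g) x)"
      using T 5 IH unfolding transfer_op_def by (simp add: posopD)
    finally show ?case by simp
  qed
qed

lemma transfer_powD:
  assumes "transfer_op \<alpha> A" "continuous_on UNIV \<alpha>" "ctn f" "ctn g"
  shows "(A ^^ m) (\<lambda>x. f ((\<alpha> ^^ m) x) * g x) = (\<lambda>x. f x * (A ^^ m) g x)"
  using transfer_pow[OF assms(1,2), of m] assms(3,4) unfolding transfer_op_def by blast

lemma posop_pow: "transfer_op \<alpha> A \<Longrightarrow> continuous_on UNIV \<alpha> \<Longrightarrow> posop (A ^^ m)"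
  using transfer_pow transfer_posop by blast

lemma posop_funpow: "posop B \<Longrightarrow> posop (B ^^ m)"
proof (induction m)
  case 0 then show ?case unfolding posop_def by simp
next
  case (Suc m) then show ?case unfolding posop_def by (simp add: posopD)
qed


lemma sup_bdd:
  assumes "compact (UNIV::'a::topological_space set)" "ctn (f::'a \<Rightarrow> real)"
  shows "bdd_above (range (\<lambda>x. \<bar>f x\<bar>))"
proof -
  have "compact (f ` UNIV)" by (rule compact_continuous_image[OF assms(2) assms(1)])
  then have "bounded (f ` UNIV)" by (rule compact_imp_bounded)
  then obtain a where "\<forall>y\<in>f ` UNIV. \<bar>y\<bar> \<le> a" unfolding bounded_real by blast
  then show ?thesis by (auto intro: bdd_aboveI)
qed

lemma sup_ge:
  assumes "compact (UNIV::'a::topological_space set)" "ctn (f::'a \<Rightarrow> real)"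
  shows "\<bar>f x\<bar> \<le> supnorm f"
  unfolding supnorm_def by (rule cSUP_upper[OF _ sup_bdd[OF assms]]) simp

lemma sup_le:
  assumes "\<And>x. \<bar>f x\<bar> \<le> c"
  shows "supnorm f \<le> c"
  unfolding supnorm_def by (rule cSUP_least) (use assms in auto)

lemma sup_nonneg:
  assumes "compact (UNIV::'a::topological_space set)" "ctn (f::'a \<Rightarrow> real)"
  shows "0 \<le> supnorm f"
  using sup_ge[OF assms, of undefined] by linarith

lemma sup_zero:
  assumes "compact (UNIV::'a::topological_space set)" "ctn (f::'a \<Rightarrow> real)" "supnorm f \<le> 0"
  shows "f x = 0"
  using sup_ge[OF assms(1,2), of x] assms(3) by linarith

lemma fekete_bound:
  fixes a :: "nat \<Rightarrow> real"
  assumes sub: "\<And>m l. a (m + l) \<le> a m + a l" and p: "p \<ge> 1"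
  shows "\<exists>K. \<forall>m\<ge>1. a m / real m \<le> a p / real p + K / real m"
proof -
  define M where "M = (\<Sum>s<p. \<bar>a s\<bar>)"
  have qs: "a (q * p + s) \<le> real q * a p + a s" for q s
  proof (induction q)
    case 0 then show ?case by simp
  next
    case (Suc q)
    have "a (Suc q * p + s) = a (p + (q * p + s))" by (simp add: algebra_simps)
    also have "\<dots> \<le> a p + a (q * p + s)" by (rule sub)
    finally show ?case using Suc by (simp add: algebra_simps)
  qed
  have "a m / real m \<le> a p / real p + (M + \<bar>a p\<bar>) / real m" if m: "m \<ge> 1" for m
  proof -
    define q where "q = m div p"
    define s where "s = m mod p"
    have ms: "m = q * p + s" unfolding q_def s_def by simp
    have sp: "s < p" unfolding s_def using p by simp
    have as: "a s \<le> M" unfolding M_def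
      using member_le_sum[of s "{..<p}" "\<lambda>s. \<bar>a s\<bar>"] sp by auto
    have rq1: "real q * real p \<le> real m" using ms by (simp add: of_nat_mult[symmetric] del: of_nat_mult)
    have rq2: "real m \<le> real q * real p + real p" using ms sp
      by (simp add: of_nat_mult[symmetric] of_nat_add[symmetric] del: of_nat_mult of_nat_add)
    have pp: "real p > 0" using p by simp
    have "real q * a p \<le> real m / real p * a p + \<bar>a p\<bar>"
    proof (cases "a p \<ge> 0")
      case True
      have "real q \<le> real m / real p" using rq1 pp by (simp add: field_simps)
      then have "real q * a p \<le> real m / real p * a p" using True by (rule mult_right_mono)
      then show ?thesis by simp
    next
      case False
      have "real m / real p - 1 \<le> real q" using rq2 pp by (simp add: field_simps)
      then have "real q * a p \<le> (real m / real p - 1) * a p" using False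
        by (intro mult_right_mono_neg) auto
      then show ?thesis using False by (simp add: algebra_simps)
    qed
    then have "a m \<le> real m / real p * a p + \<bar>a p\<bar> + M" using qs[of q s] as ms by simp
    then have "a m / real m \<le> (real m / real p * a p + \<bar>a p\<bar> + M) / real m"
      using m by (simp add: divide_right_mono)
    also have "\<dots> = a p / real p + (M + \<bar>a p\<bar>) / real m" using m pp by (simp add: field_simps)
    finally show ?thesis .
  qed
  then show ?thesis by blast
qed

lemma tendsto_const_over: "(\<lambda>m. ereal (c + K / real m)) \<longlonglongrightarrow> ereal c"
proof -
  have "(\<lambda>m. c + K / real m) \<longlonglongrightarrow> c + 0"
    by (intro tendsto_intros lim_const_over_n)
  then show ?thesis unfolding lim_ereal by simp
qed

lemma ereal_le_lim_bound:
  assumes "\<And>j. j \<ge> 1 \<Longrightarrow> X \<le> ereal (f j)" "f \<longlonglongrightarrow> c"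
  shows "X \<le> ereal c"
proof -
  have "X \<le> Liminf sequentially (\<lambda>j. ereal (f j))"
    by (rule Liminf_bounded) (use assms(1) in \<open>auto simp: eventually_sequentially\<close>)
  also have "\<dots> = ereal c" by (rule lim_imp_Liminf) (use assms(2) in \<open>auto simp: lim_ereal\<close>)
  finally show ?thesis .
qed

lemma fekete:
  fixes a :: "nat \<Rightarrow> real"
  assumes sub: "\<And>m l. a (m + l) \<le> a m + a l"
  shows "(\<lambda>m. ereal (a m / real m)) \<longlonglongrightarrow> (INF p\<in>{1..}. ereal (a p / real p))"
proof -
  define L where "L = (INF p\<in>{1..}. ereal (a p / real p))"
  have "Limsup sequentially (\<lambda>m. ereal (a m / real m)) \<le> ereal (a p / real p)" if p: "p \<ge> 1" for p
  proof -
    obtain K where K: "\<forall>m\<ge>1. a m / real m \<le> a p / real p + K / real m"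
      using fekete_bound[OF sub p] by blast
    have "Limsup sequentially (\<lambda>m. ereal (a m / real m))
        \<le> Limsup sequentially (\<lambda>m. ereal (a p / real p + K / real m))"
      by (rule Limsup_mono) (use K in \<open>auto simp: eventually_sequentially\<close>)
    also have "\<dots> = ereal (a p / real p)" by (rule lim_imp_Limsup[OF _ tendsto_const_over]) simp
    finally show ?thesis .
  qed
  then have ls: "Limsup sequentially (\<lambda>m. ereal (a m / real m)) \<le> L"
    unfolding L_def by (auto intro: INF_greatest)
  have li: "L \<le> Liminf sequentially (\<lambda>m. ereal (a m / real m))"
    unfolding L_def by (rule Liminf_bounded) (auto simp: eventually_sequentially intro: INF_lower)
  have "Liminf sequentially (\<lambda>m. ereal (a m / real m)) = L"
       "Limsup sequentially (\<lambda>m. ereal (a m / real m)) = L"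
    using ls li Liminf_le_Limsup[of sequentially "\<lambda>m. ereal (a m / real m)"] by auto
  then show ?thesis unfolding L_def[symmetric] by (simp add: tendsto_iff_Liminf_eq_Limsup)
qed


lemma Q_ctn: "posop B \<Longrightarrow> ctn ((B ^^ m) (\<lambda>_. 1))"
  using posopD(1)[OF posop_funpow[of B m], of "\<lambda>_. 1"] by simp

lemma Q_nonneg: "posop B \<Longrightarrow> 0 \<le> (B ^^ m) (\<lambda>_. 1) x"
  using posopD(4)[OF posop_funpow[of B m], of "\<lambda>_. 1"] by simp

lemma Q_sub:
  assumes C: "compact (UNIV::'a::topological_space set)" and B: "posop (B :: ('a \<Rightarrow> real) \<Rightarrow> _)"
  shows "supnorm ((B ^^ (m + l)) (\<lambda>_. 1)) \<le> supnorm ((B ^^ m) (\<lambda>_. 1)) * supnorm ((B ^^ l) (\<lambda>_. 1))"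
proof (rule sup_le)
  fix x
  let ?Q = "\<lambda>m. (B ^^ m) (\<lambda>_. 1)"
  have eq: "?Q (m + l) = (B ^^ m) (?Q l)" by (simp add: funpow_add)
  have "(B ^^ m) (?Q l) x \<le> supnorm (?Q l) * ?Q m x"
    by (rule posop_dom[OF posop_funpow[OF B] Q_ctn[OF B]])
       (use sup_ge[OF C Q_ctn[OF B], of l] in \<open>auto dest: abs_le_D1\<close>)
  also have "\<dots> \<le> supnorm (?Q l) * supnorm (?Q m)"
    using sup_ge[OF C Q_ctn[OF B], of m x] Q_nonneg[OF B, of m x] sup_nonneg[OF C Q_ctn[OF B], of l]
    by (intro mult_left_mono) auto
  finally show "\<bar>?Q (m + l) x\<bar> \<le> supnorm (?Q m) * supnorm (?Q l)"
    using eq Q_nonneg[OF B, of "m + l" x] by (simp add: mult.commute)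
qed

lemma lam_zero:
  assumes C: "compact (UNIV::'a::topological_space set)" and B: "posop (B :: ('a \<Rightarrow> real) \<Rightarrow> _)"
    and z: "supnorm ((B ^^ m0) (\<lambda>_. 1)) \<le> 0"
  shows "lim (\<lambda>k. eln (supnorm ((B ^^ k) (\<lambda>_. 1))) / ereal (real k)) = -\<infinity>"
proof (rule limI)
  have Z: "(B ^^ m0) (\<lambda>_. 1) = (\<lambda>x. 0)" using sup_zero[OF C Q_ctn[OF B] z] by auto
  have "eln (supnorm ((B ^^ k) (\<lambda>_. 1))) / ereal (real k) = -\<infinity>" if k: "k \<ge> max 1 m0" for k
  proof -
    have "(B ^^ k) (\<lambda>_. 1) = (B ^^ (k - m0)) ((B ^^ m0) (\<lambda>_. 1))"
    proof -
      have "k = (k - m0) + m0" using k by simp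
      then show ?thesis by (metis funpow_add comp_apply)
    qed
    also have "\<dots> = (\<lambda>x. 0)" unfolding Z using posop_zero[OF posop_funpow[OF B]] by simp
    finally show ?thesis using k by (simp add: supnorm_def eln_def)
  qed
  then show "(\<lambda>k. eln (supnorm ((B ^^ k) (\<lambda>_. 1))) / ereal (real k)) \<longlonglongrightarrow> -\<infinity>"
    by (intro tendsto_eventually) (auto simp: eventually_sequentially intro!: exI[of _ "max 1 m0"])
qed

lemma lam_pos:
  assumes C: "compact (UNIV::'a::topological_space set)" and B: "posop (B :: ('a \<Rightarrow> real) \<Rightarrow> _)"
    and pos: "\<And>m. supnorm ((B ^^ m) (\<lambda>_. 1)) > 0"
  shows "lim (\<lambda>k. eln (supnorm ((B ^^ k) (\<lambda>_. 1))) / ereal (real k))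
        = (INF p\<in>{1..}. ereal (ln (supnorm ((B ^^ p) (\<lambda>_. 1))) / real p))"
proof (rule limI)
  let ?a = "\<lambda>m. ln (supnorm ((B ^^ m) (\<lambda>_. 1)))"
  have sub: "?a (m + l) \<le> ?a m + ?a l" for m l
  proof -
    have "?a (m + l) \<le> ln (supnorm ((B ^^ m) (\<lambda>_. 1)) * supnorm ((B ^^ l) (\<lambda>_. 1)))"
      using Q_sub[OF C B, of m l] ln_le_cancel_iff[OF pos mult_pos_pos[OF pos pos]] by blast
    also have "\<dots> = ?a m + ?a l" using pos[of m] pos[of l] by (simp add: ln_mult)
    finally show ?thesis .
  qed
  have F: "(\<lambda>m. ereal (?a m / real m)) \<longlonglongrightarrow> (INF p\<in>{1..}. ereal (?a p / real p))"
    by (rule fekete[OF sub])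
  have "\<forall>\<^sub>F k in sequentially. ereal (?a k / real k) = eln (supnorm ((B ^^ k) (\<lambda>_. 1))) / ereal (real k)"
    using pos by (auto simp: eventually_sequentially eln_def ereal_divide intro!: exI[of _ 1])
  then show "(\<lambda>k. eln (supnorm ((B ^^ k) (\<lambda>_. 1))) / ereal (real k)) \<longlonglongrightarrow> (INF p\<in>{1..}. ereal (?a p / real p))"
    by (rule Lim_transform_eventually[OF F])
qed


lemma wop_pow:
  assumes T: "transfer_op \<beta> D" and cb: "continuous_on UNIV \<beta>" and cp: "ctn \<psi>"
  shows "(wop \<psi> D ^^ k) (\<lambda>_. 1) = (D ^^ k) (\<lambda>x. exp (\<Sum>j<k. \<psi> ((\<beta> ^^ j) x)))"
proof (induction k)
  case 0 then show ?case by simp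
next
  case (Suc k)
  have c1: "ctn (\<lambda>x. exp (\<Sum>j<k. \<psi> ((\<beta> ^^ j) x)))"
    by (intro continuous_intros ctn_comp_pow[OF cb cp])
  have c2: "ctn (\<lambda>x. exp (\<psi> x))" by (intro continuous_intros cp)
  have "(wop \<psi> D ^^ Suc k) (\<lambda>_. 1) = D (\<lambda>x. exp (\<psi> x) * (D ^^ k) (\<lambda>x. exp (\<Sum>j<k. \<psi> ((\<beta> ^^ j) x))) x)"
    by (simp only: funpow.simps comp_apply Suc) (simp add: wop_def)
  also have "(\<lambda>x. exp (\<psi> x) * (D ^^ k) (\<lambda>x. exp (\<Sum>j<k. \<psi> ((\<beta> ^^ j) x))) x)
      = (D ^^ k) (\<lambda>x. exp (\<psi> ((\<beta> ^^ k) x)) * exp (\<Sum>j<k. \<psi> ((\<beta> ^^ j) x)))"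
    using transfer_powD[OF T cb c2 c1, of k] by simp
  also have "(\<lambda>x. exp (\<psi> ((\<beta> ^^ k) x)) * exp (\<Sum>j<k. \<psi> ((\<beta> ^^ j) x))) = (\<lambda>x. exp (\<Sum>j<Suc k. \<psi> ((\<beta> ^^ j) x)))"
    by (simp add: exp_add[symmetric] add.commute)
  finally show ?case by simp
qed

lemma sum_lessThan_add: "(\<Sum>i<a + (b::nat). f i) = (\<Sum>i<a. f i) + (\<Sum>r<b. f (a + r))"
  by (induction b) (auto simp: add.assoc)

lemma sum_regroup: "(\<Sum>i<n * (K::nat). (f i :: real)) = (\<Sum>r<n. \<Sum>j<K. f (n * j + r))"
proof (induction K)
  case 0 then show ?case by simp
next
  case (Suc K)
  have "(\<Sum>i<n * Suc K. f i) = (\<Sum>i<n * K. f i) + (\<Sum>r<n. f (n * K + r))"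
    using sum_lessThan_add[of f "n * K" n] by (simp add: add.commute)
  also have "\<dots> = (\<Sum>r<n. \<Sum>j<Suc K. f (n * j + r))" using Suc by (simp add: sum.distrib)
  finally show ?case .
qed

lemma exp_sum_le:
  assumes "finite I" "I \<noteq> {}"
  shows "exp (\<Sum>r\<in>I. y r) \<le> (\<Sum>r\<in>I. exp (real (card I) * y r))"
proof -
  define m where "m = Max (y ` I)"
  have "m \<in> y ` I" unfolding m_def using assms by (intro Max_in) auto
  then obtain r0 where r0: "r0 \<in> I" "y r0 = m" by blast
  have "(\<Sum>r\<in>I. y r) \<le> real (card I) * m"
    by (rule sum_bounded_above) (use assms in \<open>auto simp: m_def\<close>)
  then have "exp (\<Sum>r\<in>I. y r) \<le> exp (real (card I) * y r0)" using r0 by simp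
  also have "\<dots> \<le> (\<Sum>r\<in>I. exp (real (card I) * y r))"
    by (rule member_le_sum[OF r0(1)]) (use assms in auto)
  finally show ?thesis .
qed


lemma KE:
  fixes \<alpha> :: "'a::t2_space \<Rightarrow> 'a" and A :: "('a \<Rightarrow> real) \<Rightarrow> ('a \<Rightarrow> real)"
  assumes C: "compact (UNIV :: 'a set)" and ca: "continuous_on UNIV \<alpha>"
    and T: "transfer_op \<alpha> A" and cp: "continuous_on UNIV \<phi>" and n: "n \<ge> 1"
  shows "supnorm ((wop \<phi> A ^^ (n * Suc k)) (\<lambda>_. 1))
     \<le> (\<Sum>r<n. supnorm ((A ^^ r) (\<lambda>_. 1)) * supnorm ((A ^^ (n - r)) (\<lambda>y. exp (real n * \<phi> y))))
        * supnorm ((wop (\<lambda>x. real n * \<phi> x) (A ^^ n) ^^ k) (\<lambda>_. 1))"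
proof -
  define N where "N = n * Suc k"
  define gk where "gk y = (\<Sum>j<k. real n * \<phi> ((\<alpha> ^^ (n * j)) y))" for y
  define G where "G r x = (\<Sum>j<Suc k. \<phi> ((\<alpha> ^^ (n * j + r)) x))" for r x
  define Pk where "Pk = (A ^^ (n * k)) (\<lambda>x. exp (gk x))"
  define c where "c r = supnorm ((A ^^ r) (\<lambda>_. 1))" for r
  define c' where "c' r = supnorm ((A ^^ (n - r)) (\<lambda>y. exp (real n * \<phi> y)))" for r
  have cpk: "ctn (\<lambda>x. \<phi> ((\<alpha> ^^ m) x))" for m by (rule ctn_comp_pow[OF ca cp])
  have PA: "posop (A ^^ m)" for m by (rule posop_pow[OF T ca])
  have cgk: "ctn gk" unfolding gk_def by (intro continuous_intros cpk)
  have cG: "ctn (G r)" for r unfolding G_def by (intro continuous_intros cpk)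
  have cnp: "ctn (\<lambda>y. exp (real n * \<phi> y))" by (intro continuous_intros cp)
  have Peq: "(wop (\<lambda>x. real n * \<phi> x) (A ^^ n) ^^ k) (\<lambda>_. 1) = Pk"
  proof -
    have cpn: "ctn (\<lambda>x. real n * \<phi> x)" by (intro continuous_intros cp)
    have "(wop (\<lambda>x. real n * \<phi> x) (A ^^ n) ^^ k) (\<lambda>_. 1)
        = ((A ^^ n) ^^ k) (\<lambda>x. exp (\<Sum>j<k. real n * \<phi> (((\<alpha> ^^ n) ^^ j) x)))"
      by (rule wop_pow[OF transfer_pow[OF T ca] ctn_funpow[OF ca] cpn])
    then show ?thesis unfolding Pk_def gk_def by (simp add: funpow_mult)
  qed
  have cPk: "ctn Pk" unfolding Pk_def by (intro posopD(1)[OF PA] continuous_intros cgk)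
  have Pk_nn: "0 \<le> Pk x" for x unfolding Pk_def by (intro posopD(4)[OF PA] continuous_intros cgk) auto
  have Qeq: "(wop \<phi> A ^^ N) (\<lambda>_. 1) = (A ^^ N) (\<lambda>x. exp (\<Sum>i<N. \<phi> ((\<alpha> ^^ i) x)))"
    by (rule wop_pow[OF T ca cp])
  have sumeq: "(\<Sum>i<N. \<phi> ((\<alpha> ^^ i) x)) = (\<Sum>r<n. G r x)" for x
    unfolding N_def G_def by (rule sum_regroup)
  have termb: "(A ^^ N) (\<lambda>x. exp (real n * G r x)) x \<le> c r * supnorm Pk * c' r" if r: "r < n" for r x
  proof -
    define R where "R = (A ^^ r) (\<lambda>_. 1)"
    define F where "F y = exp (real n * \<phi> ((\<alpha> ^^ (n * k)) y)) * exp (gk y)" for y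
    have cR: "ctn R" unfolding R_def by (intro posopD(1)[OF PA] continuous_intros)
    have cF: "ctn F" unfolding F_def by (intro continuous_intros cpk cgk)
    have R_le: "R y \<le> c r" for y unfolding R_def c_def using sup_ge[OF C cR[unfolded R_def], of y] by auto
    have R_nn: "0 \<le> R y" for y unfolding R_def by (rule posopD(4)[OF PA]) (auto intro: continuous_intros)
    have c_nn: "0 \<le> c r" unfolding c_def by (rule sup_nonneg[OF C cR[unfolded R_def]])
    have Fe: "(\<lambda>x. exp (real n * G r x)) = (\<lambda>x. F ((\<alpha> ^^ r) x) * 1)"
    proof
      fix x
      have "real n * G r x = real n * \<phi> ((\<alpha> ^^ (n * k)) ((\<alpha> ^^ r) x)) + gk ((\<alpha> ^^ r) x)"
        unfolding G_def gk_def by (simp add: sum_distrib_left funpow_add distrib_left)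
      then show "exp (real n * G r x) = F ((\<alpha> ^^ r) x) * 1" unfolding F_def by (simp add: exp_add)
    qed
    have Nsplit: "A ^^ N = A ^^ (n - r) \<circ> A ^^ (n * k) \<circ> A ^^ r"
    proof -
      have "N = (n - r) + (n * k + r)" unfolding N_def using r by simp
      then show ?thesis by (simp add: funpow_add o_assoc)
    qed
    have s1: "(A ^^ r) (\<lambda>x. F ((\<alpha> ^^ r) x) * 1) = (\<lambda>x. F x * R x)"
      unfolding R_def by (rule transfer_powD[OF T ca cF]) (intro continuous_intros)
    define H1 where "H1 = (A ^^ (n * k)) (\<lambda>y. exp (gk y) * R y)"
    have cH1: "ctn H1" unfolding H1_def by (intro posopD(1)[OF PA] continuous_intros cgk cR)
    have s2: "(A ^^ (n * k)) (\<lambda>x. F x * R x) = (\<lambda>y. exp (real n * \<phi> y) * H1 y)"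
    proof -
      have "(\<lambda>x. F x * R x) = (\<lambda>x. exp (real n * \<phi> ((\<alpha> ^^ (n * k)) x)) * (exp (gk x) * R x))"
        unfolding F_def by (simp add: mult.assoc)
      then show ?thesis unfolding H1_def
        using transfer_powD[OF T ca cnp, of "\<lambda>x. exp (gk x) * R x" "n * k"] cgk cR
        by (simp add: continuous_intros)
    qed
    have H1_le: "H1 y \<le> c r * supnorm Pk" for y
    proof -
      have "H1 y \<le> c r * Pk y" unfolding H1_def Pk_def
        by (rule posop_dom[OF PA]) (use R_le in \<open>auto intro!: continuous_intros cgk cR mult_left_mono simp: mult.commute\<close>)
      also have "\<dots> \<le> c r * supnorm Pk" using sup_ge[OF C cPk, of y] c_nn by (intro mult_left_mono) auto
      finally show ?thesis .
    qed
    have H1_nn: "0 \<le> H1 y" for y unfolding H1_def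
      by (rule posopD(4)[OF PA]) (use R_nn in \<open>auto intro!: continuous_intros cgk cR\<close>)
    have "(A ^^ N) (\<lambda>x. exp (real n * G r x)) x = (A ^^ (n - r)) (\<lambda>y. exp (real n * \<phi> y) * H1 y) x"
      unfolding Fe Nsplit using s1 s2 by simp
    also have "\<dots> \<le> (c r * supnorm Pk) * (A ^^ (n - r)) (\<lambda>y. exp (real n * \<phi> y)) x"
      by (rule posop_dom[OF PA]) (use H1_le in \<open>auto intro!: continuous_intros cH1 cp mult_right_mono simp: mult.commute\<close>)
    also have "\<dots> \<le> (c r * supnorm Pk) * c' r"
      using sup_ge[OF C posopD(1)[OF PA[of "n - r"] cnp], of x] c_nn sup_nonneg[OF C cPk] unfolding c'_def
      by (intro mult_left_mono) auto
    finally show ?thesis by simp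
  qed
  have "supnorm ((A ^^ N) (\<lambda>x. exp (\<Sum>i<N. \<phi> ((\<alpha> ^^ i) x)))) \<le> (\<Sum>r<n. c r * c' r) * supnorm Pk"
  proof (rule sup_le)
    fix x
    have c1: "ctn (\<lambda>x. exp (\<Sum>i<N. \<phi> ((\<alpha> ^^ i) x)))" by (intro continuous_intros cpk)
    have nn: "0 \<le> (A ^^ N) (\<lambda>x. exp (\<Sum>i<N. \<phi> ((\<alpha> ^^ i) x))) x"
      by (rule posopD(4)[OF PA c1]) simp
    have "(A ^^ N) (\<lambda>x. exp (\<Sum>i<N. \<phi> ((\<alpha> ^^ i) x))) x
        \<le> (A ^^ N) (\<lambda>x. \<Sum>r<n. exp (real n * G r x)) x"
    proof (rule posop_mono[OF PA c1])
      show "ctn (\<lambda>x. \<Sum>r<n. exp (real n * G r x))" by (intro continuous_intros cG)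
      fix x
      show "exp (\<Sum>i<N. \<phi> ((\<alpha> ^^ i) x)) \<le> (\<Sum>r<n. exp (real n * G r x))"
        unfolding sumeq using exp_sum_le[of "{..<n}" "\<lambda>r. G r x"] n by (simp add: lessThan_empty_iff)
    qed
    also have "\<dots> = (\<Sum>r<n. (A ^^ N) (\<lambda>x. exp (real n * G r x)) x)"
      by (subst posop_sum[OF PA]) (auto intro!: continuous_intros cG)
    also have "\<dots> \<le> (\<Sum>r<n. c r * supnorm Pk * c' r)" by (intro sum_mono termb) simp
    also have "\<dots> = (\<Sum>r<n. c r * c' r) * supnorm Pk" by (simp add: sum_distrib_left mult_ac)
    finally show "\<bar>(A ^^ N) (\<lambda>x. exp (\<Sum>i<N. \<phi> ((\<alpha> ^^ i) x))) x\<bar> \<le> (\<Sum>r<n. c r * c' r) * supnorm Pk"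
      using nn by simp
  qed
  then show ?thesis using Qeq Peq unfolding N_def c_def c'_def by simp
qed


lemma pow_sub:
  assumes C: "compact (UNIV::'a::topological_space set)" and B: "posop (B :: ('a \<Rightarrow> real) \<Rightarrow> _)"
  shows "supnorm ((B ^^ (j * p)) (\<lambda>_. 1)) \<le> supnorm ((B ^^ p) (\<lambda>_. 1)) ^ j"
proof (induction j)
  case 0
  have "supnorm (\<lambda>_::'a. 1::real) \<le> 1" by (rule sup_le) simp
  then show ?case by simp
next
  case (Suc j)
  have "supnorm ((B ^^ (Suc j * p)) (\<lambda>_. 1)) \<le> supnorm ((B ^^ p) (\<lambda>_. 1)) * supnorm ((B ^^ (j * p)) (\<lambda>_. 1))"
    using Q_sub[OF C B, of p "j * p"] by (simp add: add.commute)
  also have "\<dots> \<le> supnorm ((B ^^ p) (\<lambda>_. 1)) * supnorm ((B ^^ p) (\<lambda>_. 1)) ^ j"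
    using Suc sup_nonneg[OF C Q_ctn[OF B]] by (intro mult_left_mono) auto
  finally show ?case by simp
qed

lemma lim_aux:
  assumes p: "p \<ge> (1::nat)"
  shows "(\<lambda>j. (a + real j * b) / (real j * real p + 1)) \<longlonglongrightarrow> b / real p"
proof -
  have "(\<lambda>j. (a / real j + b) / (real p + 1 / real j)) \<longlonglongrightarrow> (0 + b) / (real p + 0)"
    using p by (intro tendsto_intros) auto
  moreover have "\<forall>\<^sub>F j in sequentially. (a / real j + b) / (real p + 1 / real j) = (a + real j * b) / (real j * real p + 1)"
  proof -
    have "(a / real j + b) / (real p + 1 / real j) = (a + real j * b) / (real j * real p + 1)" if "j \<ge> 1" for j
    proof -
      have x: "real j > 0" using that by simp
      have e1: "a / real j + b = (a + real j * b) / real j" using x by (simp add: field_simps)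
      have e2: "real p + 1 / real j = (real j * real p + 1) / real j" using x by (simp add: field_simps)
      show ?thesis unfolding e1 e2 using x by simp
    qed
    then show ?thesis by (auto simp: eventually_sequentially)
  qed
  ultimately show ?thesis by (simp add: Lim_transform_eventually)
qed

theorem lemma1p12:
  fixes \<alpha> :: "'a::t2_space \<Rightarrow> 'a"
    and A :: "('a \<Rightarrow> real) \<Rightarrow> ('a \<Rightarrow> real)"
    and \<phi> :: "'a \<Rightarrow> real"
    and n :: nat
  assumes "compact (UNIV :: 'a set)"
    and "continuous_on UNIV \<alpha>"
    and "transfer_op \<alpha> A"
    and "continuous_on UNIV \<phi>"
    and "n \<ge> 1"
  shows "ereal (real n) * lam \<phi> A \<le> lam (\<lambda>x. real n * \<phi> x) (A ^^ n)"
proof -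
  note C = assms(1) and ca = assms(2) and T = assms(3) and cp = assms(4) and n = assms(5)
  define B1 where "B1 = wop \<phi> A"
  define B2 where "B2 = wop (\<lambda>x. real n * \<phi> x) (A ^^ n)"
  define Ct where "Ct = (\<Sum>r<n. supnorm ((A ^^ r) (\<lambda>_. 1)) * supnorm ((A ^^ (n - r)) (\<lambda>y. exp (real n * \<phi> y))))"
  have P1: "posop B1" unfolding B1_def by (rule posop_wop[OF transfer_posop[OF T] cp])
  have P2: "posop B2" unfolding B2_def by (rule posop_wop[OF posop_pow[OF T ca]]) (intro continuous_intros cp)
  have ke: "supnorm ((B1 ^^ (n * Suc k)) (\<lambda>_. 1)) \<le> Ct * supnorm ((B2 ^^ k) (\<lambda>_. 1))" for k
    unfolding B1_def B2_def Ct_def by (rule KE[OF C ca T cp n])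
  have L1: "lam \<phi> A = lim (\<lambda>k. eln (supnorm ((B1 ^^ k) (\<lambda>_. 1))) / ereal (real k))"
    unfolding lam_def B1_def ..
  have L2: "lam (\<lambda>x. real n * \<phi> x) (A ^^ n) = lim (\<lambda>k. eln (supnorm ((B2 ^^ k) (\<lambda>_. 1))) / ereal (real k))"
    unfolding lam_def B2_def ..
  show ?thesis
  proof (cases "\<exists>m. supnorm ((B1 ^^ m) (\<lambda>_. 1)) \<le> 0")
    case True
    then obtain m where "supnorm ((B1 ^^ m) (\<lambda>_. 1)) \<le> 0" by blast
    then have "lam \<phi> A = -\<infinity>" unfolding L1 by (rule lam_zero[OF C P1])
    then show ?thesis using n by simp
  next
    case False
    then have pos1: "supnorm ((B1 ^^ m) (\<lambda>_. 1)) > 0" for m by (simp add: not_le)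
    have pos2: "supnorm ((B2 ^^ k) (\<lambda>_. 1)) > 0" for k
    proof (rule ccontr)
      assume "\<not> ?thesis"
      then have "supnorm ((B2 ^^ k) (\<lambda>_. 1)) = 0" using sup_nonneg[OF C Q_ctn[OF P2], of k] by simp
      then show False using ke[of k] pos1[of "n * Suc k"] by simp
    qed
    define b where "b p = ln (supnorm ((B2 ^^ p) (\<lambda>_. 1)))" for p
    have Lq: "lam \<phi> A = (INF p\<in>{1..}. ereal (ln (supnorm ((B1 ^^ p) (\<lambda>_. 1))) / real p))"
      unfolding L1 by (rule lam_pos[OF C P1 pos1])
    have Lp: "lam (\<lambda>x. real n * \<phi> x) (A ^^ n) = (INF p\<in>{1..}. ereal (b p / real p))"
      unfolding L2 b_def by (rule lam_pos[OF C P2 pos2])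
    have Ctpos: "Ct > 0"
      using ke[of 0] pos1[of "n * Suc 0"] pos2[of 0] by (metis mult_nonpos_nonneg not_le order.trans less_imp_le)
    show ?thesis unfolding Lp
    proof (rule INF_greatest)
      fix p :: nat assume "p \<in> {1..}"
      then have p: "p \<ge> 1" by simp
      show "ereal (real n) * lam \<phi> A \<le> ereal (b p / real p)"
      proof (rule ereal_le_lim_bound[OF _ lim_aux[OF p, of "ln Ct" "b p"]])
        fix j :: nat assume j: "j \<ge> 1"
        define N where "N = n * Suc (j * p)"
        have N1: "N \<ge> 1" unfolding N_def using n by simp
        have "lam \<phi> A \<le> ereal (ln (supnorm ((B1 ^^ N) (\<lambda>_. 1))) / real N)"
          unfolding Lq using N1 by (intro INF_lower) auto
        then have "ereal (real n) * lam \<phi> A \<le> ereal (real n) * ereal (ln (supnorm ((B1 ^^ N) (\<lambda>_. 1))) / real N)"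
          by (rule ereal_mult_left_mono) simp
        also have "\<dots> = ereal (ln (supnorm ((B1 ^^ N) (\<lambda>_. 1))) / (real j * real p + 1))"
        proof -
          have e: "real N = real n * (real j * real p + 1)" unfolding N_def by (simp add: algebra_simps)
          show ?thesis unfolding e using n by simp
        qed
        also have "\<dots> \<le> ereal ((ln Ct + real j * b p) / (real j * real p + 1))"
        proof -
          have "ln (supnorm ((B1 ^^ N) (\<lambda>_. 1))) \<le> ln (Ct * supnorm ((B2 ^^ (j * p)) (\<lambda>_. 1)))"
            unfolding N_def using ke[of "j * p"] pos1 pos2 Ctpos by (subst ln_le_cancel_iff) auto
          also have "\<dots> = ln Ct + ln (supnorm ((B2 ^^ (j * p)) (\<lambda>_. 1)))"
            using Ctpos pos2[of "j * p"] by (simp add: ln_mult)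
          also have "\<dots> \<le> ln Ct + real j * b p"
          proof -
            have "ln (supnorm ((B2 ^^ (j * p)) (\<lambda>_. 1))) \<le> ln (supnorm ((B2 ^^ p) (\<lambda>_. 1)) ^ j)"
              using pow_sub[OF C P2, of j p] pos2 by (subst ln_le_cancel_iff) auto
            also have "\<dots> = real j * b p" unfolding b_def using pos2 by (simp add: ln_realpow)
            finally show ?thesis by simp
          qed
          finally show ?thesis by (simp add: divide_right_mono)
        qed
        finally show "ereal (real n) * lam \<phi> A \<le> ereal ((ln Ct + real j * b p) / (real j * real p + 1))" .
      qed
    qed
  qed
qed

end
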